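(* Let $\bm{L}\in\mathbb{R}^{m\times n}$ have rank $r$ and compact SVD $\bm{L}=\bm{W}_{\bm{L}}\bm{\Sigma}_{\bm{L}}\bm{V}_{\bm{L}}^T$, and suppose $\max_{i}\|\bm{W}_{\bm{L}}^T\bm{e}_i\|_2\leq\sqrt{\mu_1(\bm{L}) r/m}$ and $\max_{i}\|\bm{V}_{\bm{L}}^T\bm{e}_i\|_2\leq\sqrt{\mu_2(\bm{L}) r/n}$. Then for any $J\subseteq[n]$, the matrix $\bm{C}=\bm{L}(:,J)$, with compact SVD $\bm{C}=\bm{W}_{\bm{C}}\bm{\Sigma}_{\bm{C}}\bm{V}_{\bm{C}}^T$, satisfies \[\max_i\|\bm{V}_{\bm{C}}^T\bm{e}_i\|_2\leq\kappa(\bm{L})\,\frac{\|\bm{C}^\dagger\|_2}{\|\bm{L}^\dagger\|_2}\sqrt{\frac{\mu_2(\bm{L}) r}{n}}.\]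
   Context: $[n]=\{1,\dots,n\}$; $\bm{L}(:,J)$ is the column submatrix with column indices in $J$; $\bm{A}^\dagger$ is the Moore–Penrose pseudoinverse; $\kappa(\bm{A})=\|\bm{A}\|_2\|\bm{A}^\dagger\|_2=\sigma_{\max}(\bm{A})/\sigma_{\min}(\bm{A})$ with $\sigma_{\min}$ the smallest nonzero singular value. *)

theory Defs
  imports Main "HOL.Real" "Jordan_Normal_Form.DL_Rank" "Jordan_Normal_Form.DL_Submatrix"
begin

definition vnorm2 :: "real vec \<Rightarrow> real" where
  "vnorm2 v = sqrt (\<Sum>i<dim_vec v. (v $ i)^2)"

definition opnorm2 :: "real mat \<Rightarrow> real" where
  "opnorm2 A = Sup {vnorm2 (A *\<^sub>v x) | x. x \<in> carrier_vec (dim_col A) \<and> vnorm2 x \<le> 1}"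

definition pinv :: "real mat \<Rightarrow> real mat" where
  "pinv A = (THE X. X \<in> carrier_mat (dim_col A) (dim_row A) \<and>
      A * X * A = A \<and> X * A * X = X \<and>
      transpose_mat (A * X) = A * X \<and> transpose_mat (X * A) = X * A)"

definition kappa :: "real mat \<Rightarrow> real" where
  "kappa A = opnorm2 A * opnorm2 (pinv A)"

definition mrank :: "real mat \<Rightarrow> nat" where
  "mrank A = vec_space.rank (dim_row A) A"

definition compact_svd :: "real mat \<Rightarrow> real mat \<Rightarrow> real mat \<Rightarrow> real mat \<Rightarrow> nat \<Rightarrow> bool" where
  "compact_svd A W S V k \<longleftrightarrow>
     W \<in> carrier_mat (dim_row A) k \<and> S \<in> carrier_mat k k \<and> V \<in> carrier_mat (dim_col A) k \<and>
     transpose_mat W * W = 1\<^sub>m k \<and> transpose_mat V * V = 1\<^sub>m k \<and>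
     (\<forall>i<k. \<forall>j<k. i \<noteq> j \<longrightarrow> S $$ (i,j) = 0) \<and> (\<forall>i<k. S $$ (i,i) > 0) \<and>
     A = W * S * transpose_mat V"

end

theory Submission imports Defs "HOL-Analysis.L2_Norm" begin

lemma vnorm2_L2: "vnorm2 v = L2_set (\<lambda>i. v $ i) {..<dim_vec v}"
  by (simp add: vnorm2_def L2_set_def)

lemma vnorm2_nonneg: "vnorm2 v \<ge> 0"
  by (simp add: vnorm2_def sum_nonneg)

lemma vnorm2_sq: "(vnorm2 v)^2 = v \<bullet> v"
  by (simp add: vnorm2_def scalar_prod_def sum_nonneg power2_eq_square lessThan_atLeast0)

lemma vnorm2_eq_sqrt: "vnorm2 v = sqrt (v \<bullet> v)"
  by (metis vnorm2_sq vnorm2_nonneg real_sqrt_unique)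

lemma vnorm2_comp: "i < dim_vec v \<Longrightarrow> \<bar>v $ i\<bar> \<le> vnorm2 v"
proof -
  assume i: "i < dim_vec v"
  have "(v$i)^2 \<le> (\<Sum>j<dim_vec v. (v $ j)^2)"
    by (rule member_le_sum[where f="\<lambda>j. (v$j)^2"], insert i, auto)
  then have "sqrt ((v$i)^2) \<le> vnorm2 v" unfolding vnorm2_def by (rule real_sqrt_le_mono)
  then show ?thesis by simp
qed

lemma vnorm2_smult: "vnorm2 (c \<cdot>\<^sub>v v) = \<bar>c\<bar> * vnorm2 v"
  by (simp add: vnorm2_def power_mult_distrib sum_distrib_left[symmetric] real_sqrt_mult)

lemma vnorm2_zero_imp: "vnorm2 v = 0 \<Longrightarrow> v = 0\<^sub>v (dim_vec v)"
proof (intro eq_vecI)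
  fix i assume "vnorm2 v = 0" "i < dim_vec (0\<^sub>v (dim_vec v))"
  then show "v $ i = 0\<^sub>v (dim_vec v) $ i" using vnorm2_comp[of i v] by auto
qed simp

lemma mat_vec_bound:
  fixes A :: "real mat"
  assumes x: "x \<in> carrier_vec (dim_col A)"
  shows "vnorm2 (A *\<^sub>v x) \<le> (\<Sum>i<dim_row A. \<Sum>j<dim_col A. \<bar>A $$ (i,j)\<bar>) * vnorm2 x"
proof -
  have "vnorm2 (A *\<^sub>v x) \<le> (\<Sum>i<dim_vec (A *\<^sub>v x). \<bar>(A *\<^sub>v x) $ i\<bar>)"
    unfolding vnorm2_L2 by (rule L2_set_le_sum_abs)
  then have "vnorm2 (A *\<^sub>v x) \<le> (\<Sum>i<dim_row A. \<bar>(A *\<^sub>v x) $ i\<bar>)" by simp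
  also have "\<dots> \<le> (\<Sum>i<dim_row A. (\<Sum>j<dim_col A. \<bar>A $$ (i,j)\<bar>) * vnorm2 x)"
  proof (rule sum_mono)
    fix i assume i: "i \<in> {..<dim_row A}"
    have "\<bar>(A *\<^sub>v x) $ i\<bar> = \<bar>\<Sum>j<dim_col A. A $$ (i,j) * x $ j\<bar>"
      using i x by (simp add: scalar_prod_def lessThan_atLeast0)
    also have "\<dots> \<le> (\<Sum>j<dim_col A. \<bar>A $$ (i,j)\<bar> * \<bar>x $ j\<bar>)"
      by (rule order_trans[OF sum_abs], simp add: abs_mult)
    also have "\<dots> \<le> (\<Sum>j<dim_col A. \<bar>A $$ (i,j)\<bar> * vnorm2 x)"
      by (rule sum_mono, rule mult_left_mono, rule vnorm2_comp, insert x, auto)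
    finally show "\<bar>(A *\<^sub>v x) $ i\<bar> \<le> (\<Sum>j<dim_col A. \<bar>A $$ (i,j)\<bar>) * vnorm2 x"
      by (simp add: sum_distrib_right)
  qed
  finally show ?thesis by (simp add: sum_distrib_right)
qed

lemma opnorm2_bdd: "bdd_above {vnorm2 (A *\<^sub>v x) | x. x \<in> carrier_vec (dim_col A) \<and> vnorm2 x \<le> 1}"
proof -
  let ?B = "(\<Sum>i<dim_row A. \<Sum>j<dim_col A. \<bar>A $$ (i,j)\<bar>)"
  have "?B \<ge> 0" by (simp add: sum_nonneg)
  show ?thesis
  proof (rule bdd_aboveI)
    fix y assume "y \<in> {vnorm2 (A *\<^sub>v x) | x. x \<in> carrier_vec (dim_col A) \<and> vnorm2 x \<le> 1}"
    then obtain x where x: "x \<in> carrier_vec (dim_col A)" "vnorm2 x \<le> 1" "y = vnorm2 (A *\<^sub>v x)" by auto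
    have "y \<le> ?B * vnorm2 x" using mat_vec_bound[OF x(1)] x(3) by simp
    also have "\<dots> \<le> ?B" using x(2) \<open>?B \<ge> 0\<close> by (simp add: mult_left_le)
    finally show "y \<le> ?B" .
  qed
qed

lemma opnorm2_upper: "x \<in> carrier_vec (dim_col A) \<Longrightarrow> vnorm2 x \<le> 1 \<Longrightarrow> vnorm2 (A *\<^sub>v x) \<le> opnorm2 A"
  unfolding opnorm2_def by (rule cSup_upper[OF _ opnorm2_bdd], auto)

lemma opnorm2_nonneg: "opnorm2 A \<ge> 0"
  using opnorm2_upper[of "0\<^sub>v (dim_col A)" A] vnorm2_nonneg[of "A *\<^sub>v 0\<^sub>v (dim_col A)"]
  by (simp add: vnorm2_def)

lemma opnorm2_bound:
  fixes A :: "real mat"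
  assumes x: "x \<in> carrier_vec (dim_col A)"
  shows "vnorm2 (A *\<^sub>v x) \<le> opnorm2 A * vnorm2 x"
proof (cases "vnorm2 x = 0")
  case True
  then have "x = 0\<^sub>v (dim_col A)" using vnorm2_zero_imp[of x] x by auto
  then have "A *\<^sub>v x = 0\<^sub>v (dim_row A)" by (intro eq_vecI) auto
  then show ?thesis using True by (simp add: vnorm2_def)
next
  case False
  then have pos: "vnorm2 x > 0" using vnorm2_nonneg[of x] by simp
  let ?c = "1 / vnorm2 x"
  have "vnorm2 (?c \<cdot>\<^sub>v x) = 1" using pos by (simp add: vnorm2_smult)
  then have "vnorm2 (A *\<^sub>v (?c \<cdot>\<^sub>v x)) \<le> opnorm2 A"
    by (intro opnorm2_upper, insert x, auto)
  moreover have "A *\<^sub>v (?c \<cdot>\<^sub>v x) = ?c \<cdot>\<^sub>v (A *\<^sub>v x)"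
    by (rule mult_mat_vec[OF _ x], auto)
  ultimately have "?c * vnorm2 (A *\<^sub>v x) \<le> opnorm2 A" using pos by (simp add: vnorm2_smult)
  then show ?thesis using pos by (simp add: field_simps)
qed

lemma vnorm2_isometry:
  fixes V :: "real mat"
  assumes V: "V \<in> carrier_mat n k" and VV: "transpose_mat V * V = 1\<^sub>m k" and y: "y \<in> carrier_vec k"
  shows "vnorm2 (V *\<^sub>v y) = vnorm2 y"
proof -
  have "(transpose_mat V *\<^sub>v (V *\<^sub>v y)) \<bullet> y = (V *\<^sub>v y) \<bullet> (V *\<^sub>v y)"
    by (rule transpose_vec_mult_scalar[OF V y], insert V y, auto)
  moreover have "transpose_mat V *\<^sub>v (V *\<^sub>v y) = y"
    using V y VV by (metis assoc_mult_mat_vec one_mult_mat_vec transpose_carrier_mat)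
  ultimately show ?thesis unfolding vnorm2_eq_sqrt by simp
qed

lemma penrose_unique:
  fixes A X Y :: "real mat"
  assumes A: "A \<in> carrier_mat m n" and X: "X \<in> carrier_mat n m" and Y: "Y \<in> carrier_mat n m"
    and X1: "A * X * A = A" and X2: "X * A * X = X" and X3: "transpose_mat (A * X) = A * X"
    and X4: "transpose_mat (X * A) = X * A"
    and Y1: "A * Y * A = A" and Y2: "Y * A * Y = Y" and Y3: "transpose_mat (A * Y) = A * Y"
    and Y4: "transpose_mat (Y * A) = Y * A"
  shows "X = Y"
proof -
  have AX: "A * X \<in> carrier_mat m m" and AY: "A * Y \<in> carrier_mat m m"
    and XA: "X * A \<in> carrier_mat n n" and YA: "Y * A \<in> carrier_mat n n" using A X Y by auto
  have At: "transpose_mat A \<in> carrier_mat n m" using A by simp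
  have Xt: "transpose_mat X \<in> carrier_mat m n" using X by simp
  have Yt: "transpose_mat Y \<in> carrier_mat m n" using Y by simp
  have tA1: "transpose_mat A = transpose_mat A * (A * Y)"
  proof -
    have "transpose_mat A = transpose_mat (A * Y * A)" using Y1 by simp
    also have "\<dots> = transpose_mat A * transpose_mat (A * Y)" using transpose_mult[OF AY A] .
    finally show ?thesis using Y3 by simp
  qed
  have tA2: "transpose_mat A = (X * A) * transpose_mat A"
  proof -
    have "transpose_mat A = transpose_mat (A * (X * A))" using X1 A X by simp
    also have "\<dots> = transpose_mat (X * A) * transpose_mat A" using transpose_mult[OF A XA] .
    finally show ?thesis using X4 by simp
  qed
  have "X = X * (A * X)" using X2 X A by simp
  also have "\<dots> = X * (transpose_mat X * transpose_mat A)"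
    using X3 transpose_mult[OF A X] by simp
  also have "\<dots> = X * (transpose_mat X * (transpose_mat A * (A * Y)))" using tA1 by simp
  also have "\<dots> = X * ((transpose_mat X * transpose_mat A) * (A * Y))"
    using Xt At AY by simp
  also have "\<dots> = X * ((A * X) * (A * Y))"
    using X3 transpose_mult[OF A X] by simp
  also have "\<dots> = (X * A * X) * (A * Y)" by (metis assoc_mult_mat[OF X AX AY] assoc_mult_mat[OF X A X])
  also have "\<dots> = X * A * Y" using X2 X A Y by simp
  finally have 1: "X = X * A * Y" .
  have "Y = (Y * A) * Y" using Y2 Y A by simp
  also have "\<dots> = (transpose_mat A * transpose_mat Y) * Y"
    using Y4 transpose_mult[OF Y A] by simp
  also have "\<dots> = (((X * A) * transpose_mat A) * transpose_mat Y) * Y" using tA2 by simp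
  also have "\<dots> = (X * A) * ((transpose_mat A * transpose_mat Y) * Y)"
  proof -
    have AtYt: "transpose_mat A * transpose_mat Y \<in> carrier_mat n n" using At Yt by simp
    show ?thesis using assoc_mult_mat[OF XA At Yt] assoc_mult_mat[OF XA AtYt Y] by simp
  qed
  also have "\<dots> = (X * A) * ((Y * A) * Y)"
    using Y4 transpose_mult[OF Y A] by simp
  also have "\<dots> = X * A * Y" using Y2 X A Y by simp
  finally show ?thesis using 1 by simp
qed

definition Sinv :: "real mat \<Rightarrow> nat \<Rightarrow> real mat" where
  "Sinv S k = mat k k (\<lambda>(i,j). if i = j then 1 / S $$ (i,i) else 0)"

lemma Sinv_carrier[simp]: "Sinv S k \<in> carrier_mat k k" by (simp add: Sinv_def)

lemma Sinv_prod:
  assumes S: "S \<in> carrier_mat k k" and d: "\<forall>i<k. \<forall>j<k. i \<noteq> j \<longrightarrow> S $$ (i,j) = 0"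
    and p: "\<forall>i<k. S $$ (i,i) > 0"
  shows "S * Sinv S k = 1\<^sub>m k" "Sinv S k * S = 1\<^sub>m k"
proof -
  show "S * Sinv S k = 1\<^sub>m k"
  proof (rule eq_matI)
    fix i j assume ij: "i < dim_row (1\<^sub>m k)" "j < dim_col (1\<^sub>m k)"
    have "(S * Sinv S k) $$ (i,j) = (\<Sum>l\<in>{0..<k}. S $$ (i,l) * (if l = j then 1 / S $$ (l,l) else 0))"
      using ij S by (simp add: scalar_prod_def Sinv_def)
    also have "\<dots> = S $$ (i,j) / S $$ (j,j)"
      using ij by (simp add: if_distrib cong: if_cong)
    also have "\<dots> = 1\<^sub>m k $$ (i,j)" using ij d p by (cases "i = j") (auto simp: less_imp_neq[symmetric])
    finally show "(S * Sinv S k) $$ (i,j) = 1\<^sub>m k $$ (i,j)" .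
  qed (use S in \<open>auto simp: Sinv_def\<close>)
  show "Sinv S k * S = 1\<^sub>m k"
  proof (rule eq_matI)
    fix i j assume ij: "i < dim_row (1\<^sub>m k)" "j < dim_col (1\<^sub>m k)"
    have "(Sinv S k * S) $$ (i,j) = (\<Sum>l\<in>{0..<k}. (if i = l then 1 / S $$ (i,i) else 0) * S $$ (l,j))"
      using ij S by (simp add: scalar_prod_def Sinv_def)
    also have "\<dots> = (\<Sum>l\<in>{0..<k}. if l = i then S $$ (i,j) / S $$ (i,i) else 0)"
      by (rule sum.cong) auto
    also have "\<dots> = S $$ (i,j) / S $$ (i,i)"
      using ij by (simp add: sum.delta)
    also have "\<dots> = 1\<^sub>m k $$ (i,j)" using ij d p by (cases "i = j") (auto simp: less_imp_neq[symmetric])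
    finally show "(Sinv S k * S) $$ (i,j) = 1\<^sub>m k $$ (i,j)" .
  qed (use S in \<open>auto simp: Sinv_def\<close>)
qed

lemma svd_pinv:
  fixes A W S V :: "real mat"
  assumes svd: "compact_svd A W S V k"
  shows "pinv A = V * Sinv S k * transpose_mat W"
    and "pinv A * A = V * transpose_mat V"
proof -
  define m where "m = dim_row A"
  define n where "n = dim_col A"
  define Si where "Si = Sinv S k"
  define Wt where "Wt = transpose_mat W"
  define Vt where "Vt = transpose_mat V"
  have W: "W \<in> carrier_mat m k" and S: "S \<in> carrier_mat k k" and V: "V \<in> carrier_mat n k"
    and WW: "Wt * W = 1\<^sub>m k" and VV: "Vt * V = 1\<^sub>m k"
    and d: "\<forall>i<k. \<forall>j<k. i \<noteq> j \<longrightarrow> S $$ (i,j) = 0" and p: "\<forall>i<k. S $$ (i,i) > 0"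
    and Aeq: "A = W * S * Vt"
    using svd unfolding compact_svd_def m_def n_def Wt_def Vt_def by auto
  have Si: "Si \<in> carrier_mat k k" unfolding Si_def by simp
  have Wt: "Wt \<in> carrier_mat k m" and Vt: "Vt \<in> carrier_mat k n" unfolding Wt_def Vt_def using W V by auto
  have SSi: "S * Si = 1\<^sub>m k" and SiS: "Si * S = 1\<^sub>m k" using Sinv_prod[OF S d p] unfolding Si_def by auto
  define X where "X = V * Si * Wt"
  have A: "A \<in> carrier_mat m n" unfolding m_def n_def by auto
  have X: "X \<in> carrier_mat n m" unfolding X_def using V Si Wt by auto
  have WS: "W * S \<in> carrier_mat m k" using W S by auto
  have VSi: "V * Si \<in> carrier_mat n k" using V Si by auto
  have SiWt: "Si * Wt \<in> carrier_mat k m" using Si Wt by auto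
  have SVt: "S * Vt \<in> carrier_mat k n" using S Vt by auto
  have VtX: "Vt * X = Si * Wt"
  proof -
    have "Vt * X = Vt * (V * (Si * Wt))" unfolding X_def using assoc_mult_mat[OF V Si Wt] by simp
    also have "\<dots> = (Vt * V) * (Si * Wt)" using assoc_mult_mat[OF Vt V SiWt] by simp
    finally show ?thesis using VV left_mult_one_mat[OF SiWt] by simp
  qed
  have AW: "Wt * A = S * Vt"
  proof -
    have "Wt * A = Wt * (W * (S * Vt))" unfolding Aeq using assoc_mult_mat[OF W S Vt] by simp
    also have "\<dots> = (Wt * W) * (S * Vt)" using assoc_mult_mat[OF Wt W SVt] by simp
    finally show ?thesis using WW left_mult_one_mat[OF SVt] by simp
  qed
  have AX: "A * X = W * Wt"
  proof -
    have "A * X = (W * S) * (Vt * X)" unfolding Aeq using assoc_mult_mat[OF WS Vt X] by simp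
    also have "\<dots> = W * ((S * Si) * Wt)"
      unfolding VtX using assoc_mult_mat[OF W S SiWt] assoc_mult_mat[OF S Si Wt] by simp
    finally show ?thesis using SSi left_mult_one_mat[OF Wt] by simp
  qed
  have XA: "X * A = V * Vt"
  proof -
    have "X * A = (V * Si) * (Wt * A)" unfolding X_def using assoc_mult_mat[OF VSi Wt A] by simp
    also have "\<dots> = V * ((Si * S) * Vt)"
      unfolding AW using assoc_mult_mat[OF V Si SVt] assoc_mult_mat[OF Si S Vt] by simp
    finally show ?thesis using SiS left_mult_one_mat[OF Vt] by simp
  qed
  have P1: "A * X * A = A"
  proof -
    have "A * X * A = W * (Wt * A)" unfolding AX using assoc_mult_mat[OF W Wt A] by simp
    also have "\<dots> = W * (S * Vt)" using AW by simp
    also have "\<dots> = A" using Aeq assoc_mult_mat[OF W S Vt] by simp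
    finally show ?thesis .
  qed
  have P2: "X * A * X = X"
  proof -
    have "X * A * X = V * (Vt * X)" unfolding XA using assoc_mult_mat[OF V Vt X] by simp
    also have "\<dots> = V * (Si * Wt)" using VtX by simp
    also have "\<dots> = X" unfolding X_def using assoc_mult_mat[OF V Si Wt] by simp
    finally show ?thesis .
  qed
  have P3: "transpose_mat (A * X) = A * X" unfolding AX Wt_def using transpose_mult[OF W Wt] Wt_def by simp
  have P4: "transpose_mat (X * A) = X * A" unfolding XA Vt_def using transpose_mult[OF V Vt] Vt_def by simp
  have "pinv A = X"
    unfolding pinv_def
  proof (rule the_equality)
    show "X \<in> carrier_mat (dim_col A) (dim_row A) \<and> A * X * A = A \<and> X * A * X = X \<and>
      transpose_mat (A * X) = A * X \<and> transpose_mat (X * A) = X * A"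
      using X P1 P2 P3 P4 unfolding m_def n_def by auto
    fix Y assume "Y \<in> carrier_mat (dim_col A) (dim_row A) \<and> A * Y * A = A \<and> Y * A * Y = Y \<and>
      transpose_mat (A * Y) = A * Y \<and> transpose_mat (Y * A) = Y * A"
    then show "Y = X" using penrose_unique[OF A X _ P1 P2 P3 P4] unfolding m_def n_def by metis
  qed
  then show "pinv A = V * Sinv S k * transpose_mat W" unfolding X_def Si_def Wt_def .
  show "pinv A * A = V * transpose_mat V" using \<open>pinv A = X\<close> XA Vt_def by simp
qed

lemma pinv_pos:
  fixes L W S V :: "real mat"
  assumes svd: "compact_svd L W S V r" and r: "r > 0"
  shows "opnorm2 (pinv L) > 0"
proof -
  define m where "m = dim_row L"
  define n where "n = dim_col L"
  have W: "W \<in> carrier_mat m r" and S: "S \<in> carrier_mat r r" and V: "V \<in> carrier_mat n r"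
    and WW: "transpose_mat W * W = 1\<^sub>m r" and VV: "transpose_mat V * V = 1\<^sub>m r"
    and d: "\<forall>i<r. \<forall>j<r. i \<noteq> j \<longrightarrow> S $$ (i,j) = 0" and p: "\<forall>i<r. S $$ (i,i) > 0"
    using svd unfolding compact_svd_def m_def n_def by auto
  define Si where "Si = Sinv S r"
  have Si: "Si \<in> carrier_mat r r" unfolding Si_def by simp
  have Wt: "transpose_mat W \<in> carrier_mat r m" using W by simp
  have VSi: "V * Si \<in> carrier_mat n r" using V Si by simp
  have P: "pinv L = V * Si * transpose_mat W" using svd_pinv(1)[OF svd] Si_def by simp
  define x where "x = col W 0"
  have x: "x \<in> carrier_vec m" unfolding x_def using W r by simp
  have "x \<bullet> x = (transpose_mat W * W) $$ (0,0)" unfolding x_def using W r by simp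
  then have "x \<bullet> x = 1" using WW r by simp
  then have nx: "vnorm2 x = 1" unfolding vnorm2_eq_sqrt by simp
  have "transpose_mat W *\<^sub>v x = col (transpose_mat W * W) 0"
    unfolding x_def using col_mult2[OF Wt W r] by simp
  then have Wx: "transpose_mat W *\<^sub>v x = unit_vec r 0" using WW r by simp
  have "pinv L *\<^sub>v x = (V * Si) *\<^sub>v (transpose_mat W *\<^sub>v x)"
    unfolding P using assoc_mult_mat_vec[OF VSi Wt x] by simp
  also have "\<dots> = col ((V * Si) * 1\<^sub>m r) 0" unfolding Wx using col_mult2[OF VSi _ r, of "1\<^sub>m r"] r by simp
  also have "\<dots> = col (V * Si) 0" using right_mult_one_mat[OF VSi] by simp
  also have "\<dots> = V *\<^sub>v col Si 0" using col_mult2[OF V Si r] .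
  finally have e: "pinv L *\<^sub>v x = V *\<^sub>v col Si 0" .
  have "vnorm2 (pinv L *\<^sub>v x) = vnorm2 (col Si 0)" unfolding e
    by (rule vnorm2_isometry[OF V VV], insert Si r, simp)
  moreover have "\<bar>col Si 0 $ 0\<bar> \<le> vnorm2 (col Si 0)" by (rule vnorm2_comp, insert Si r, simp)
  moreover have "col Si 0 $ 0 = 1 / S $$ (0,0)" using r unfolding Si_def Sinv_def by simp
  moreover have "1 / S $$ (0,0) > 0" using p r by simp
  ultimately have "vnorm2 (pinv L *\<^sub>v x) > 0" by linarith
  moreover have "vnorm2 (pinv L *\<^sub>v x) \<le> opnorm2 (pinv L)"
    by (rule opnorm2_upper, insert x nx P V Si Wt, auto simp: m_def)
  ultimately show ?thesis by simp
qed

theorem lemma4p2: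
  fixes L W\<^sub>L S\<^sub>L V\<^sub>L :: "real mat" and m n r :: nat and \<mu>\<^sub>1 \<mu>\<^sub>2 :: real and J :: "nat set"
  assumes "L \<in> carrier_mat m n"
    and "mrank L = r"
    and "compact_svd L W\<^sub>L S\<^sub>L V\<^sub>L r"
    and "\<forall>i<m. vnorm2 (row W\<^sub>L i) \<le> sqrt (\<mu>\<^sub>1 * r / m)"
    and "\<forall>i<n. vnorm2 (row V\<^sub>L i) \<le> sqrt (\<mu>\<^sub>2 * r / n)"
    and "J \<subseteq> {..<n}"
  shows "\<forall>W\<^sub>C S\<^sub>C V\<^sub>C k. compact_svd (submatrix L UNIV J) W\<^sub>C S\<^sub>C V\<^sub>C k \<longrightarrow>
           (\<forall>i<card J. vnorm2 (row V\<^sub>C i) \<le>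
              kappa L * (opnorm2 (pinv (submatrix L UNIV J)) / opnorm2 (pinv L)) * sqrt (\<mu>\<^sub>2 * r / n))"
proof (intro allI impI)
  fix WC SC VC k i
  assume svdC: "compact_svd (submatrix L UNIV J) WC SC VC k" and i: "i < card J"
  note L = assms(1) and svdL = assms(3) and inc = assms(5) and J = assms(6)
  define C where "C = submatrix L UNIV J"
  define P where "P = pinv C"
  define s where "s = sqrt (\<mu>\<^sub>2 * r / n)"
  have cJ: "{j. j < n \<and> j \<in> J} = J" using J by auto
  have dC: "dim_row C = m" "dim_col C = card J" unfolding C_def dim_submatrix using L cJ by auto
  have C: "C \<in> carrier_mat m (card J)" using dC by (intro carrier_matI) auto
  have svdC': "compact_svd C WC SC VC k" using svdC unfolding C_def .
  have VC: "VC \<in> carrier_mat (card J) k" and VCVC: "transpose_mat VC * VC = 1\<^sub>m k"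
    using svdC' dC unfolding compact_svd_def by metis+
  have PC: "P * C = VC * transpose_mat VC" unfolding P_def using svd_pinv(2)[OF svdC'] .
  have P: "P \<in> carrier_mat (card J) m"
  proof -
    have "pinv C = VC * Sinv SC k * transpose_mat WC" using svd_pinv(1)[OF svdC'] .
    moreover have "WC \<in> carrier_mat m k" using svdC' dC unfolding compact_svd_def by metis
    ultimately show ?thesis unfolding P_def
      using mult_carrier_mat[OF mult_carrier_mat[OF VC Sinv_carrier], of "transpose_mat WC" m] by simp
  qed
  have WL: "W\<^sub>L \<in> carrier_mat m r" and SL: "S\<^sub>L \<in> carrier_mat r r" and VL: "V\<^sub>L \<in> carrier_mat n r"
    and VLVL: "transpose_mat V\<^sub>L * V\<^sub>L = 1\<^sub>m r" and Leq: "L = W\<^sub>L * S\<^sub>L * transpose_mat V\<^sub>L"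
    using svdL L unfolding compact_svd_def by (metis carrier_matD(1) carrier_matD(2))+
  define j where "j = pick J i"
  have jn: "j < n" unfolding j_def by (rule pick_le, insert i cJ, simp)
  define y where "y = row V\<^sub>L j"
  have y: "y \<in> carrier_vec r" unfolding y_def using VL jn by simp
  have ys: "vnorm2 y \<le> s" unfolding y_def s_def using inc jn by simp
  have colC: "col C i = col L j"
  proof (rule eq_vecI)
    fix l assume "l < dim_vec (col L j)"
    then have l: "l < m" using L by simp
    show "col C i $ l = col L j $ l"
      using l i C L cJ jn unfolding C_def j_def by (simp add: submatrix_index pick_UNIV)
  qed (use C L in simp)
  have WS: "W\<^sub>L * S\<^sub>L \<in> carrier_mat m r" using WL SL by simp
  have VLt: "transpose_mat V\<^sub>L \<in> carrier_mat r n" using VL by simp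
  have LV: "L * V\<^sub>L = W\<^sub>L * S\<^sub>L"
  proof -
    have "L * V\<^sub>L = (W\<^sub>L * S\<^sub>L) * (transpose_mat V\<^sub>L * V\<^sub>L)" using Leq assoc_mult_mat[OF WS VLt VL] by simp
    then show ?thesis using VLVL right_mult_one_mat[OF WS] by simp
  qed
  have colL: "col L j = L *\<^sub>v (V\<^sub>L *\<^sub>v y)"
  proof -
    have "col L j = (W\<^sub>L * S\<^sub>L) *\<^sub>v col (transpose_mat V\<^sub>L) j"
      using Leq col_mult2[OF WS VLt jn] by simp
    also have "\<dots> = (L * V\<^sub>L) *\<^sub>v y" unfolding LV y_def using jn VL by simp
    also have "\<dots> = L *\<^sub>v (V\<^sub>L *\<^sub>v y)" using assoc_mult_mat_vec[OF L VL y] .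
    finally show ?thesis .
  qed
  have bL: "vnorm2 (col L j) \<le> opnorm2 L * vnorm2 y"
  proof -
    have "vnorm2 (col L j) \<le> opnorm2 L * vnorm2 (V\<^sub>L *\<^sub>v y)"
      unfolding colL by (rule opnorm2_bound, insert L VL y, simp)
    then show ?thesis using vnorm2_isometry[OF VL VLVL y] by simp
  qed
  have rowVC: "row VC i \<in> carrier_vec k" using VC i by simp
  have "vnorm2 (row VC i) = vnorm2 (VC *\<^sub>v row VC i)"
    using vnorm2_isometry[OF VC VCVC rowVC] by simp
  also have "VC *\<^sub>v row VC i = P *\<^sub>v col C i"
  proof -
    have "VC *\<^sub>v row VC i = col (VC * transpose_mat VC) i"
      using col_mult2[OF VC _ i, of "transpose_mat VC"] VC i by simp
    also have "\<dots> = col (P * C) i" using PC by simp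
    also have "\<dots> = P *\<^sub>v col C i" using col_mult2[OF P C i] .
    finally show ?thesis .
  qed
  finally have "vnorm2 (row VC i) = vnorm2 (P *\<^sub>v col C i)" .
  also have "\<dots> \<le> opnorm2 P * vnorm2 (col C i)"
    by (rule opnorm2_bound, insert P C i, simp)
  also have "\<dots> \<le> opnorm2 P * (opnorm2 L * vnorm2 y)"
    using colC bL opnorm2_nonneg[of P] by (simp add: mult_left_mono)
  finally have main: "vnorm2 (row VC i) \<le> opnorm2 P * (opnorm2 L * vnorm2 y)" .
  have s0: "s \<ge> 0" using ys vnorm2_nonneg[of y] by linarith
  have fin: "vnorm2 (row VC i) \<le> kappa L * (opnorm2 (pinv C) / opnorm2 (pinv L)) * s"
  proof (cases "r = 0")
    case True
    then have "vnorm2 y = 0" using y by (simp add: vnorm2_def)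
    then have "vnorm2 (row VC i) \<le> 0" using main by simp
    moreover have "kappa L * (opnorm2 (pinv C) / opnorm2 (pinv L)) * s \<ge> 0"
      unfolding kappa_def using opnorm2_nonneg s0 by simp
    ultimately show ?thesis by linarith
  next
    case False
    then have b: "opnorm2 (pinv L) > 0" using pinv_pos[OF svdL] by simp
    have "kappa L * (opnorm2 (pinv C) / opnorm2 (pinv L)) * s = opnorm2 P * (opnorm2 L * s)"
      unfolding kappa_def P_def using b by (simp add: field_simps)
    moreover have "opnorm2 P * (opnorm2 L * vnorm2 y) \<le> opnorm2 P * (opnorm2 L * s)"
      using ys opnorm2_nonneg[of P] opnorm2_nonneg[of L] by (simp add: mult_left_mono)
    ultimately show ?thesis using main by linarith
  qed
  then show "vnorm2 (row VC i) \<le> kappa L * (opnorm2 (pinv (submatrix L UNIV J)) / opnorm2 (pinv L)) * s"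
    unfolding C_def .
qed

end
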